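(* Let $q$ be a prime power and $m,n$ positive integers. Let $\alpha,\beta\in\mathbb{F}_{q^2}^*$ be distinct with $\alpha^{q+1}=\beta^{q+1}=1$, and let $\varepsilon\in\mathbb{F}_{q^2}^*$. Then $$f(x)=(x+\alpha x^q)^m+\varepsilon(x+\beta x^q)^n$$ is a permutation polynomial of $\mathbb{F}_{q^2}$ if and only if $\gcd(mn,q-1)=1$ and $\varepsilon^{q-1}\alpha^m\neq\beta^n$.
   Context: A polynomial is a permutation polynomial of $\mathbb{F}_{q^2}$ if the map it induces on $\mathbb{F}_{q^2}$ is bijective. *)

theory Defs
  imports "HOL-Number_Theory.Number_Theory"
begin

text \<open>A permutation polynomial of a finite field: the induced map is bijective.
  We represent F_{q^2} by a finite field type of cardinality q^2.\<close>

definition is_permutation_map :: "('a \<Rightarrow> 'a) \<Rightarrow> bool" where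
  "is_permutation_map f \<longleftrightarrow> bij f"

end

theory Submission
  imports Defs "HOL-Computational_Algebra.Polynomial"
begin

lemma field_power_card_eq_same:
  fixes x :: "'a :: {field,finite}"
  shows   "x ^ card (UNIV :: 'a set) = x"
proof (cases "x = 0")
  case False
  have "x * (\<Prod>y\<in>UNIV-{0}. x * y) = x * x ^ (card (UNIV :: 'a set) - 1) * \<Prod>(UNIV-{0})"
    by (simp add: prod.distrib mult_ac)
  also have "x * x ^ (card (UNIV :: 'a set) - 1) = x ^ Suc (card (UNIV :: 'a set) - 1)"
    by (subst power_Suc) auto
  also have "Suc (card (UNIV :: 'a set) - 1) = card (UNIV :: 'a set)"
    using finite_UNIV_card_ge_0[where ?'a = 'a] by simp
  also have "(\<Prod>y\<in>UNIV-{0}. x * y) = (\<Prod>y\<in>UNIV-{0}. y)"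
    by (rule prod.reindex_bij_witness[of _ "\<lambda>y. y / x" "\<lambda>y. x * y"]) (use False in auto)
  finally show ?thesis
    by simp
qed (use finite_UNIV_card_ge_0[where ?'a = 'a] in auto)

lemma frob_setup:
  assumes "primepow q" and "card (UNIV :: 'a::{field,finite} set) = q ^ 2"
  shows "(\<forall>x y::'a. (x+y)^q = x^q + y^q) \<and> (\<forall>x::'a. (x^q)^q = x)"
proof -
  have cp: "CHAR('a) > 0" by (rule finite_imp_CHAR_pos) simp
  hence pc: "prime CHAR('a)" by (rule prime_CHAR_semidom)
  obtain p k where pk: "prime p" "k > 0" "q = p ^ k" using assms(1) by (auto simp: primepow_def)
  have "CHAR('a) dvd q ^ 2" using CHAR_dvd_CARD[where 'a='a] assms(2) by simp
  hence "CHAR('a) dvd p ^ (k*2)" using pk by (simp add: power_mult)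
  hence "CHAR('a) dvd p" using pc prime_dvd_power by blast
  hence "CHAR('a) = p" using pc pk(1) primes_dvd_imp_eq by blast
  hence "(x+y)^q = x^q + y^q" for x y :: 'a
    using freshmans_dream'[OF pc, of q k] pk by simp
  moreover have "(x^q)^q = x" for x :: 'a
    using field_power_card_eq_same[of x] assms(2) by (simp add: power_mult[symmetric] power2_eq_square)
  ultimately show ?thesis by blast
qed

lemma roots_le1:
  fixes c d :: "'a::field"
  assumes "c \<noteq> 0" "k \<ge> 2"
  shows "card {y. c * y^k = d * y} \<le> k"
proof -
  define p where "p = monom c k - [:0, d:]"
  have pe: "poly p y = c * y^k - d * y" for y by (simp add: p_def poly_monom)
  have "coeff p k = c" using assms by (auto simp: p_def coeff_monom coeff_pCons split: nat.split)
  hence "p \<noteq> 0" using assms by auto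
  have "degree p \<le> k" unfolding p_def
    using assms by (intro degree_diff_le) (auto simp: degree_monom_le)
  have "{y. c * y^k = d * y} = {y. poly p y = 0}" by (auto simp: pe)
  thus ?thesis using card_poly_roots_bound[OF \<open>p \<noteq> 0\<close>] \<open>degree p \<le> k\<close> by simp
qed

lemma roots_le2:
  fixes c :: "'a::field"
  assumes "k \<ge> 1"
  shows "card {y::'a. y^k = 1} \<le> k"
proof -
  define p where "p = monom (1::'a) k - [:1:]"
  have pe: "poly p y = y^k - 1" for y by (simp add: p_def poly_monom)
  have "coeff p k = 1" using assms by (auto simp: p_def coeff_monom coeff_pCons split: nat.split)
  hence "p \<noteq> 0" using assms by auto
  have "degree p \<le> k" unfolding p_def
    using assms by (intro degree_diff_le) (auto simp: degree_monom_le)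
  have "{y::'a. y^k = 1} = {y. poly p y = 0}" by (auto simp: pe)
  thus ?thesis using card_poly_roots_bound[OF \<open>p \<noteq> 0\<close>] \<open>degree p \<le> k\<close> by simp
qed


lemma pow_inj_iff:
  fixes a :: "'a::{field,finite}"
  assumes frob: "\<And>x y::'a. (x+y)^q = x^q + y^q"
    and q2: "q \<ge> 2" and a0: "a \<noteq> 0" and cV: "card {y::'a. a * y^q = y} = q" and k0: "k > 0"
  shows "inj_on (\<lambda>u. u^k) {y::'a. a * y^q = y} \<longleftrightarrow> gcd k (q - 1) = 1"
proof
  define V where "V = {y::'a. a * y^q = y}"
  have Vq: "u \<in> V \<Longrightarrow> u^q = u / a" for u using a0 by (auto simp: V_def field_simps)
  have inF: "w^q = w" if "u1 \<in> V" "u2 \<in> V" "u2 \<noteq> 0" "w = u1 / u2" for u1 u2 w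
    using that Vq[of u1] Vq[of u2] a0 by (simp add: power_divide)
  show "gcd k (q - 1) = 1" if inj: "inj_on (\<lambda>u. u^k) {y::'a. a * y^q = y}"
  proof (rule ccontr)
    assume gne: "gcd k (q - 1) \<noteq> 1"
    define d where "d = gcd k (q - 1)"
    have d0: "d > 0" using k0 by (simp add: d_def)
    have d2: "d \<ge> 2" using gne d0 d_def by linarith
    have dk: "d dvd k" and dq: "d dvd (q - 1)" by (simp_all add: d_def)
    obtain e where e: "q - 1 = d * e" using dq by blast
    have e1: "e \<ge> 1" using e q2 by (cases e) auto
    have "2*e \<le> d*e" using d2 by simp
    hence elt: "e < q - 1" using e e1 by linarith
    have "card V \<ge> 2" using cV q2 by (simp add: V_def)
    hence "\<exists>u0\<in>V. u0 \<noteq> 0"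
    proof -
      assume "card V \<ge> 2"
      show ?thesis
      proof (rule ccontr)
        assume "\<not> ?thesis"
        hence "V \<subseteq> {0}" by auto
        hence "card V \<le> card {0::'a}" by (intro card_mono) auto
        thus False using \<open>card V \<ge> 2\<close> by simp
      qed
    qed
    then obtain u0 where u0: "u0 \<in> V" "u0 \<noteq> 0" by blast
    define K where "K = {w::'a. w^q = w}"
    have "(\<lambda>u. u / u0) ` V \<subseteq> K" using inF u0 by (auto simp: K_def)
    moreover have "inj_on (\<lambda>u. u / u0) V" using u0 by (auto simp: inj_on_def)
    ultimately have "card V \<le> card K" by (metis card_image card_mono finite)
    hence cK: "card K \<ge> q" using cV by (simp add: V_def)
    define K0 where "K0 = K - {0}"
    have "0 \<in> K" using q2 by (simp add: K_def)
    hence cK0: "card K0 \<ge> q - 1" using cK by (simp add: K0_def card_Diff_singleton)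
    have K0one: "w^(q-1) = 1" if "w \<in> K0" for w
    proof -
      have "w * w^(q-1) = w * 1" using that q2 by (simp add: K0_def K_def flip: power_Suc)
      thus ?thesis using that by (simp add: K0_def)
    qed
    define S where "S = {w::'a. w^e = 1}"
    have cS: "card S \<le> e" unfolding S_def by (rule roots_le2) (use e1 in simp)
    have "(\<lambda>w. w^d) ` K0 \<subseteq> S"
    proof
      fix z assume "z \<in> (\<lambda>w. w^d) ` K0"
      then obtain w where "w \<in> K0" "z = w^d" by blast
      thus "z \<in> S" using K0one[of w] e by (simp add: S_def flip: power_mult)
    qed
    have "\<not> inj_on (\<lambda>w. w^d) K0"
    proof
      assume "inj_on (\<lambda>w. w^d) K0"
      hence "card K0 \<le> card S" using \<open>(\<lambda>w. w^d) ` K0 \<subseteq> S\<close> by (metis card_image card_mono finite)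
      thus False using cK0 cS elt by linarith
    qed
    then obtain w1 w2 where w: "w1 \<in> K0" "w2 \<in> K0" "w1 \<noteq> w2" "w1^d = w2^d"
      by (auto simp: inj_on_def)
    obtain k' where k': "k = d * k'" using dk by blast
    have "u0 * w1 \<in> V" "u0 * w2 \<in> V" using u0 w by (auto simp: V_def K0_def K_def power_mult_distrib)
    moreover have "u0 * w1 \<noteq> u0 * w2" using u0 w by simp
    moreover have "w1^k = w2^k" unfolding k' power_mult using w(4) by simp
    hence "(u0 * w1)^k = (u0 * w2)^k" by (simp only: power_mult_distrib)
    ultimately show False using inj_onD[OF inj] unfolding V_def by blast
  qed
  show "inj_on (\<lambda>u. u^k) {y::'a. a * y^q = y}" if g: "gcd k (q - 1) = 1"
  proof (rule inj_onI)
    fix u1 u2 assume u: "u1 \<in> {y::'a. a * y^q = y}" "u2 \<in> {y::'a. a * y^q = y}" "u1^k = u2^k"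
    show "u1 = u2"
    proof (cases "u2 = 0")
      case True thus ?thesis using u k0 by (auto simp: power_0_left)
    next
      case False
      define w where "w = u1 / u2"
      have "w^q = w" using inF[of u1 u2 w] u False by (simp add: V_def w_def)
      have "u1 \<noteq> 0" using u False k0 by (auto simp: power_0_left)
      hence "w \<noteq> 0" using False by (simp add: w_def)
      have w1: "w^(q-1) = 1"
      proof -
        have "w * w^(q-1) = w * 1" using \<open>w^q = w\<close> q2 by (simp flip: power_Suc)
        thus ?thesis using \<open>w \<noteq> 0\<close> by simp
      qed
      have wk: "w^k = 1" using u(3) False by (simp add: w_def power_divide)
      obtain x y where "k * x = (q - 1) * y + gcd k (q - 1)" using bezout_nat[of k "q - 1"] k0 by auto
      hence "k * x = (q - 1) * y + 1" using g by simp
      hence "w^(k*x) = w^((q-1)*y) * w" by (simp add: power_add)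
      hence "w = 1" using wk w1 by (simp add: power_mult)
      thus ?thesis using False by (simp add: w_def)
    qed
  qed
qed


theorem proposition3p1:
  fixes \<alpha> \<beta> \<epsilon> :: "'a::{field,finite}" and q m n :: nat
  assumes "primepow q"
    and "card (UNIV :: 'a set) = q ^ 2"
    and "m > 0" and "n > 0"
    and "\<alpha> \<noteq> 0" and "\<beta> \<noteq> 0" and "\<alpha> \<noteq> \<beta>"
    and "\<alpha> ^ (q + 1) = 1" and "\<beta> ^ (q + 1) = 1"
    and "\<epsilon> \<noteq> 0"
  shows "is_permutation_map (\<lambda>x. (x + \<alpha> * x ^ q) ^ m + \<epsilon> * (x + \<beta> * x ^ q) ^ n)
     \<longleftrightarrow> (gcd (m * n) (q - 1) = 1 \<and> \<epsilon> ^ (q - 1) * \<alpha> ^ m \<noteq> \<beta> ^ n)"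
proof -
  note a0 = assms(5) and b0 = assms(6) and e0 = assms(10)
  have q2: "q \<ge> 2" using primepow_gt_Suc_0[OF assms(1)] by simp
  have frob: "\<And>x y::'a. (x+y)^q = x^q + y^q" and inv: "\<And>x::'a. (x^q)^q = x"
    using frob_setup[OF assms(1,2)] by blast+
  have frobm: "(x - y)^q = x^q - y^q" for x y :: 'a
    using frob[of "x - y" y] by (simp add: algebra_simps)
  have z0: "(0::'a)^q = 0" using q2 by simp
  have aq: "\<alpha> * \<alpha>^q = 1" using assms(8) by (simp add: mult.commute)
  have bq: "\<beta> * \<beta>^q = 1" using assms(9) by (simp add: mult.commute)
  define L where "L x = x + \<alpha> * x^q" for x :: 'a
  define M where "M x = x + \<beta> * x^q" for x :: 'a
  define VA where "VA = {y::'a. \<alpha> * y^q = y}"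
  define VB where "VB = {y::'a. \<beta> * y^q = y}"
  have LV: "L x \<in> VA" for x
  proof -
    have "\<alpha> * (L x)^q = \<alpha> * x^q + (\<alpha> * \<alpha>^q) * (x^q)^q"
      by (simp add: L_def frob power_mult_distrib algebra_simps)
    thus ?thesis using aq inv by (simp add: VA_def L_def add.commute)
  qed
  have MV: "M x \<in> VB" for x
  proof -
    have "\<beta> * (M x)^q = \<beta> * x^q + (\<beta> * \<beta>^q) * (x^q)^q"
      by (simp add: M_def frob power_mult_distrib algebra_simps)
    thus ?thesis using bq inv by (simp add: VB_def M_def add.commute)
  qed
  define \<Phi> where "\<Phi> x = (L x, M x)" for x
  have injP: "inj \<Phi>"
  proof (rule injI)
    fix x y assume "\<Phi> x = \<Phi> y"
    hence "L x = L y" "M x = M y" by (auto simp: \<Phi>_def)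
    hence "L x - M x = L y - M y" by simp
    hence "(\<alpha> - \<beta>) * x^q = (\<alpha> - \<beta>) * y^q" by (simp add: L_def M_def algebra_simps)
    hence "x^q = y^q" using assms(7) by simp
    hence "(x^q)^q = (y^q)^q" by simp
    thus "x = y" using inv by simp
  qed
  have cA: "card VA \<le> q" unfolding VA_def using roots_le1[OF a0 q2, of 1] by simp
  have cB: "card VB \<le> q" unfolding VB_def using roots_le1[OF b0 q2, of 1] by simp
  have sub: "range \<Phi> \<subseteq> VA \<times> VB" using LV MV by (auto simp: \<Phi>_def)
  have "q^2 = card (range \<Phi>)" using assms(2) card_image[OF injP] by simp
  also have "\<dots> \<le> card (VA \<times> VB)" using sub by (intro card_mono) auto
  also have "\<dots> = card VA * card VB" by (simp add: card_cartesian_product)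
  finally have prod: "q * q \<le> card VA * card VB" by (simp add: power2_eq_square)
  have cAq: "card VA = q"
  proof (rule ccontr)
    assume "card VA \<noteq> q"
    hence "card VA < q" using cA by simp
    moreover have "card VA * card VB \<le> card VA * q" using cB by simp
    moreover have "card VA * q < q * q" using \<open>card VA < q\<close> q2 by simp
    ultimately have "card VA * card VB < q * q" by linarith
    thus False using prod by simp
  qed
  have cBq: "card VB = q"
  proof (rule ccontr)
    assume "card VB \<noteq> q"
    hence "card VB < q" using cB by simp
    moreover have "card VA * card VB \<le> q * card VB" using cA by simp
    moreover have "q * card VB < q * q" using \<open>card VB < q\<close> q2 by simp
    ultimately have "card VA * card VB < q * q" by linarith
    thus False using prod by simp
  qed
  have rng: "range \<Phi> = VA \<times> VB"
    using sub card_image[OF injP] assms(2) cAq cBq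
    by (intro card_subset_eq) (auto simp: card_cartesian_product power2_eq_square)
  define g where "g = (\<lambda>(u,v). u^m + \<epsilon> * v^n)"
  have fg: "(\<lambda>x. (x + \<alpha> * x ^ q) ^ m + \<epsilon> * (x + \<beta> * x ^ q) ^ n) = g \<circ> \<Phi>"
    by (auto simp: g_def \<Phi>_def L_def M_def)
  have perm_iff: "is_permutation_map (\<lambda>x. (x + \<alpha> * x ^ q) ^ m + \<epsilon> * (x + \<beta> * x ^ q) ^ n)
      \<longleftrightarrow> inj_on g (VA \<times> VB)"
  proof -
    have "is_permutation_map (g \<circ> \<Phi>) \<longleftrightarrow> inj (g \<circ> \<Phi>)"
      unfolding is_permutation_map_def bij_def using finite_UNIV_inj_surj[of "g \<circ> \<Phi>"] finite_UNIV[where 'a='a] by blast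
    also have "\<dots> \<longleftrightarrow> inj_on g (range \<Phi>)"
      using comp_inj_on_iff[OF injP, of g] by simp
    finally show ?thesis using fg rng by simp
  qed
  have gcd_iff: "gcd (m * n) (q - 1) = 1 \<longleftrightarrow> gcd m (q - 1) = 1 \<and> gcd n (q - 1) = 1"
    using coprime_mult_left_iff[of m n "q - 1"] unfolding coprime_iff_gcd_eq_1 by blast
  have injA: "inj_on (\<lambda>u. u^m) VA \<longleftrightarrow> gcd m (q - 1) = 1"
    unfolding VA_def by (rule pow_inj_iff[OF frob q2 a0 _ assms(3)]) (use cAq VA_def in simp)
  have injB: "inj_on (\<lambda>u. u^n) VB \<longleftrightarrow> gcd n (q - 1) = 1"
    unfolding VB_def by (rule pow_inj_iff[OF frob q2 b0 _ assms(4)]) (use cBq VB_def in simp)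
  have m0: "(0::'a)^m = 0" and n0: "(0::'a)^n = 0" using assms(3,4) by (auto simp: power_0_left)
  have "0 \<in> VA" "0 \<in> VB" using z0 by (auto simp: VA_def VB_def)
  have core: "inj_on g (VA \<times> VB) \<longleftrightarrow>
      inj_on (\<lambda>u. u^m) VA \<and> inj_on (\<lambda>u. u^n) VB \<and> \<epsilon> ^ (q - 1) * \<alpha> ^ m \<noteq> \<beta> ^ n"
    (is "?L \<longleftrightarrow> ?R")
  proof -
    have pq: "(x^k)^q = (x^q)^k" for x :: 'a and k by (simp flip: power_mult add: mult.commute)
    have Am: "\<alpha>^m * (u^m)^q = u^m" if "u \<in> VA" for u
    proof -
      have "\<alpha>^m * (u^m)^q = (\<alpha> * u^q)^m" by (simp add: pq power_mult_distrib)
      thus ?thesis using that by (simp add: VA_def)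
    qed
    have Bn: "\<beta>^n * (v^n)^q = v^n" if "v \<in> VB" for v
    proof -
      have "\<beta>^n * (v^n)^q = (\<beta> * v^q)^n" by (simp add: pq power_mult_distrib)
      thus ?thesis using that by (simp add: VB_def)
    qed
    have eqq: "\<epsilon>^q = \<epsilon> * \<epsilon>^(q-1)" using q2 by (simp flip: power_Suc)
    show ?thesis
    proof
      assume ginj: ?L
      have iA: "inj_on (\<lambda>u. u^m) VA"
      proof (rule inj_onI)
        fix u1 u2 assume u: "u1 \<in> VA" "u2 \<in> VA" "u1^m = u2^m"
        have gg: "g (u1,0) = g (u2,0)" using u by (simp add: g_def n0)
        have "(u1,0) = (u2,0)" using inj_onD[OF ginj gg] u \<open>0 \<in> VB\<close> by auto
        thus "u1 = u2" by simp
      qed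
      have iB: "inj_on (\<lambda>u. u^n) VB"
      proof (rule inj_onI)
        fix v1 v2 assume v: "v1 \<in> VB" "v2 \<in> VB" "v1^n = v2^n"
        have gg: "g (0,v1) = g (0,v2)" using v by (simp add: g_def m0)
        have "(0,v1) = (0,v2)" using inj_onD[OF ginj gg] v \<open>0 \<in> VA\<close> by auto
        thus "v1 = v2" by simp
      qed
      have "\<epsilon> ^ (q - 1) * \<alpha> ^ m \<noteq> \<beta> ^ n"
      proof
        assume eq: "\<epsilon> ^ (q - 1) * \<alpha> ^ m = \<beta> ^ n"
        define V' where "V' = {y::'a. \<alpha>^m * y^q = y}"
        have cV': "card V' \<le> q" unfolding V'_def using roots_le1[of "\<alpha>^m" q 1] a0 q2 by simp
        have s1: "(\<lambda>u. u^m) ` VA \<subseteq> V'" using Am by (auto simp: V'_def)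
        have c1: "card ((\<lambda>u. u^m) ` VA) = q" using card_image[OF iA] cAq by simp
        have im1: "(\<lambda>u. u^m) ` VA = V'"
          using s1 c1 cV' by (intro card_seteq) auto
        have s2: "(\<lambda>v. \<epsilon> * v^n) ` VB \<subseteq> V'"
        proof
          fix y assume "y \<in> (\<lambda>v. \<epsilon> * v^n) ` VB"
          then obtain v where v: "v \<in> VB" "y = \<epsilon> * v^n" by blast
          have "\<alpha>^m * y^q = \<epsilon> * ((\<epsilon> ^ (q - 1) * \<alpha> ^ m) * (v^n)^q)"
            using v(2) eqq by (simp add: power_mult_distrib algebra_simps)
          also have "\<dots> = y" using eq Bn[OF v(1)] v(2) by simp
          finally show "y \<in> V'" by (simp add: V'_def)
        qed
        have iB': "inj_on (\<lambda>v. \<epsilon> * v^n) VB" using iB e0 by (auto simp: inj_on_def)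
        have c2: "card ((\<lambda>v. \<epsilon> * v^n) ` VB) = q" using card_image[OF iB'] cBq by simp
        have im2: "(\<lambda>v. \<epsilon> * v^n) ` VB = V'"
          using s2 c2 cV' by (intro card_seteq) auto
        have "card V' = q" using im1 c1 by simp
        have "\<exists>z\<in>V'. z \<noteq> 0"
        proof (rule ccontr)
          assume "\<not> ?thesis"
          hence "V' \<subseteq> {0}" by auto
          hence "card V' \<le> card {0::'a}" by (intro card_mono) auto
          thus False using \<open>card V' = q\<close> q2 by simp
        qed
        then obtain z where z: "z \<in> V'" "z \<noteq> 0" by blast
        have "(-z)^q = - (z^q)" using frobm[of 0 z] z0 by simp
        hence "- z \<in> V'" using z(1) by (simp add: V'_def)
        have "z \<in> (\<lambda>u. u^m) ` VA" using z(1) by (simp only: im1)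
        then obtain u where u: "u \<in> VA" "z = u^m" by auto
        have "- z \<in> (\<lambda>v. \<epsilon> * v^n) ` VB" using \<open>- z \<in> V'\<close> by (simp only: im2)
        then obtain v where v: "v \<in> VB" "- z = \<epsilon> * v^n" by auto
        have gg: "g (u, v) = g (0, 0)" using u v by (simp add: g_def m0 n0 flip: v(2))
        have "(u, v) = (0, 0)" using inj_onD[OF ginj gg] u v \<open>0 \<in> VA\<close> \<open>0 \<in> VB\<close> by auto
        hence "z = 0" using u m0 by simp
        thus False using z by simp
      qed
      thus ?R using iA iB by blast
    next
      assume R: ?R
      hence iA: "inj_on (\<lambda>u. u^m) VA" and iB: "inj_on (\<lambda>u. u^n) VB"
        and ne: "\<epsilon> ^ (q - 1) * \<alpha> ^ m \<noteq> \<beta> ^ n" by blast+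
      show ?L
      proof (rule inj_onI)
        fix x y assume x: "x \<in> VA \<times> VB" and y: "y \<in> VA \<times> VB" and gxy: "g x = g y"
        obtain u1 v1 where x1: "x = (u1, v1)" by (cases x)
        obtain u2 v2 where y2: "y = (u2, v2)" by (cases y)
        have mem: "u1 \<in> VA" "v1 \<in> VB" "u2 \<in> VA" "v2 \<in> VB" using x y x1 y2 by auto
        have geq: "u1^m + \<epsilon> * v1^n = u2^m + \<epsilon> * v2^n" using gxy x1 y2 by (simp add: g_def)
        define d where "d = u1^m - u2^m"
        have hd: "d = \<epsilon> * (v2^n - v1^n)" using geq by (simp add: d_def algebra_simps)
        have dA: "\<alpha>^m * d^q = d"
          by (simp add: d_def frobm right_diff_distrib Am mem)
        have "d^q = \<epsilon>^q * (v2^n - v1^n)^q" unfolding hd by (rule power_mult_distrib)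
        also have "(v2^n - v1^n)^q = (v2^n)^q - (v1^n)^q" by (rule frobm)
        finally have dq: "d^q = \<epsilon>^q * ((v2^n)^q - (v1^n)^q)" .
        have "\<beta>^n * \<epsilon> * d^q = \<epsilon> * \<epsilon>^q * (\<beta>^n * (v2^n)^q - \<beta>^n * (v1^n)^q)"
          unfolding dq by (simp add: algebra_simps)
        also have "\<dots> = \<epsilon> * \<epsilon>^q * (v2^n - v1^n)" using Bn mem by simp
        also have "\<dots> = \<epsilon>^q * d" unfolding hd by (simp add: algebra_simps)
        finally have dB: "\<beta>^n * \<epsilon> * d^q = \<epsilon>^q * d" .
        have d0: "d = 0"
        proof (rule ccontr)
          assume "d \<noteq> 0"
          have "\<beta>^n * \<epsilon> * d = \<beta>^n * \<epsilon> * (\<alpha>^m * d^q)" using dA by simp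
          also have "\<dots> = \<alpha>^m * (\<beta>^n * \<epsilon> * d^q)" by (simp add: algebra_simps)
          also have "\<dots> = \<alpha>^m * (\<epsilon>^q * d)" using dB by simp
          finally have "(\<beta>^n * \<epsilon>) * d = (\<alpha>^m * \<epsilon>^q) * d" by (simp add: algebra_simps)
          hence "\<beta>^n * \<epsilon> = \<alpha>^m * \<epsilon>^q" using \<open>d \<noteq> 0\<close> by simp
          hence "\<beta>^n * \<epsilon> = (\<epsilon> ^ (q - 1) * \<alpha> ^ m) * \<epsilon>" using eqq by (simp add: algebra_simps)
          hence "\<beta>^n = \<epsilon> ^ (q - 1) * \<alpha> ^ m" using e0 by simp
          thus False using ne by simp
        qed
        have "u1^m = u2^m" using d0 by (simp add: d_def)
        hence "u1 = u2" using inj_onD[OF iA] mem by blast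
        moreover have "v1^n = v2^n" using d0 hd e0 by simp
        hence "v1 = v2" using inj_onD[OF iB] mem by blast
        ultimately show "x = y" using x1 y2 by simp
      qed
    qed
  qed
  show ?thesis by (simp only: perm_iff core injA injB gcd_iff conj_assoc)
qed

end
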